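(* Let $\mathcal{G}$ be an ergodic $d$-regular Borel pmp graph on a standard probability space $(X,\mu)$, and assume $\mathcal{G}$ has no odd cycles. If $\mathcal{G}$ satisfies the strict measurable Tutte condition, then $\mathcal{G}$ is strictly expanding for independent sets.
   Context: A Borel graph on $X$ is a simple undirected graph with Borel edge set; $d$-regular means all degrees are $d$ (up to null sets). pmp: every partial Borel bijection of $X$ whose graph is contained in the connectedness relation preserves $\mu$. Ergodic: every measurable union of connected components has measure $0$ or $1$. For $A\subseteq X$, $\mathcal{N}(A)$ is the set of vertices having a neighbor in $A$. For measurable $A$, $\mathcal{O}_A$ is the set of $x\in X\setminus A$ lying in a finite connected component of odd size of $\mathcal{G}\restriction(X\setminus A)$, $\mathcal{O}_A^{(2k+1)}$ those in such a component of size $2k+1$, and $\nu_A(Y)=\sum_{k\ge0}\frac{1}{2k+1}\mu(Y\cap\mathcal{O}_A^{(2k+1)})$. Strict measurable Tutte condition: there is $c<1$ with $\nu_A(\mathcal{O}_A)\le c\,\mu(A)$ for all measurable $A$. Strictly expanding for independent sets: there is $c>1$ with $\mu(\mathcal{N}(A))\ge c\,\mu(A)$ for every measurable set $A$ containing no two adjacent vertices. *)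

theory Defs
  imports "HOL-Probability.Probability"
begin

definition borel_graph :: "'a::polish_space measure \<Rightarrow> ('a \<Rightarrow> 'a \<Rightarrow> bool) \<Rightarrow> bool" where
  "borel_graph M E \<longleftrightarrow>
     (\<forall>x y. E x y \<longrightarrow> E y x) \<and> (\<forall>x. \<not> E x x) \<and>
     {p. E (fst p) (snd p)} \<in> sets (M \<Otimes>\<^sub>M M)"

definition d_regular :: "'a measure \<Rightarrow> ('a \<Rightarrow> 'a \<Rightarrow> bool) \<Rightarrow> nat \<Rightarrow> bool" where
  "d_regular M E d \<longleftrightarrow> (AE x in M. finite {y. E x y} \<and> card {y. E x y} = d)"

definition connected_rel :: "('a \<Rightarrow> 'a \<Rightarrow> bool) \<Rightarrow> 'a \<Rightarrow> 'a \<Rightarrow> bool" where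
  "connected_rel E = E\<^sup>*\<^sup>*"

definition pmp_graph :: "'a measure \<Rightarrow> ('a \<Rightarrow> 'a \<Rightarrow> bool) \<Rightarrow> bool" where
  "pmp_graph M E \<longleftrightarrow>
     (\<forall>A f. A \<in> sets M \<and> inj_on f A \<and> (\<forall>B \<in> sets M. f -` B \<inter> A \<in> sets M) \<and>
            f ` A \<in> sets M \<and> (\<forall>x\<in>A. connected_rel E x (f x))
        \<longrightarrow> measure M (f ` A) = measure M A)"

definition ergodic_graph :: "'a measure \<Rightarrow> ('a \<Rightarrow> 'a \<Rightarrow> bool) \<Rightarrow> bool" where
  "ergodic_graph M E \<longleftrightarrow>
     (\<forall>A \<in> sets M. (\<forall>x y. x \<in> A \<and> E x y \<longrightarrow> y \<in> A) \<longrightarrow>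
        measure M A = 0 \<or> measure M A = 1)"

definition no_odd_cycles :: "('a \<Rightarrow> 'a \<Rightarrow> bool) \<Rightarrow> bool" where
  "no_odd_cycles E \<longleftrightarrow>
     \<not> (\<exists>xs. odd (length xs) \<and> length xs \<ge> 3 \<and> distinct xs \<and>
           (\<forall>i < length xs. E (xs ! i) (xs ! ((i + 1) mod length xs))))"

definition nbhd :: "('a \<Rightarrow> 'a \<Rightarrow> bool) \<Rightarrow> 'a set \<Rightarrow> 'a set" where
  "nbhd E A = {x. \<exists>y\<in>A. E x y}"

definition comp_outside :: "('a \<Rightarrow> 'a \<Rightarrow> bool) \<Rightarrow> 'a set \<Rightarrow> 'a \<Rightarrow> 'a set" where
  "comp_outside E A x = {y. (\<lambda>u v. E u v \<and> u \<notin> A \<and> v \<notin> A)\<^sup>*\<^sup>* x y}"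

definition odd_part_size :: "('a \<Rightarrow> 'a \<Rightarrow> bool) \<Rightarrow> 'a set \<Rightarrow> nat \<Rightarrow> 'a set" where
  "odd_part_size E A n =
     {x. x \<notin> A \<and> finite (comp_outside E A x) \<and> card (comp_outside E A x) = n}"

definition odd_part :: "('a \<Rightarrow> 'a \<Rightarrow> bool) \<Rightarrow> 'a set \<Rightarrow> 'a set" where
  "odd_part E A =
     {x. x \<notin> A \<and> finite (comp_outside E A x) \<and> odd (card (comp_outside E A x))}"

definition nu :: "'a measure \<Rightarrow> ('a \<Rightarrow> 'a \<Rightarrow> bool) \<Rightarrow> 'a set \<Rightarrow> 'a set \<Rightarrow> real" where
  "nu M E A Y = (\<Sum>k. measure (completion M) (Y \<inter> odd_part_size E A (2 * k + 1)) / real (2 * k + 1))"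

definition strict_tutte :: "'a measure \<Rightarrow> ('a \<Rightarrow> 'a \<Rightarrow> bool) \<Rightarrow> bool" where
  "strict_tutte M E \<longleftrightarrow>
     (\<exists>c::real. c < 1 \<and> (\<forall>A \<in> sets M. nu M E A (odd_part E A) \<le> c * measure M A))"

definition independent_set :: "('a \<Rightarrow> 'a \<Rightarrow> bool) \<Rightarrow> 'a set \<Rightarrow> bool" where
  "independent_set E A \<longleftrightarrow> (\<forall>x\<in>A. \<forall>y\<in>A. \<not> E x y)"

definition strictly_expanding_indep :: "'a measure \<Rightarrow> ('a \<Rightarrow> 'a \<Rightarrow> bool) \<Rightarrow> bool" where
  "strictly_expanding_indep M E \<longleftrightarrow>
     (\<exists>c::real. c > 1 \<and> (\<forall>A \<in> sets M. independent_set E A \<longrightarrow>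
         measure (completion M) (nbhd E A) \<ge> c * measure M A))"

end

theory Submission
  imports Defs "HOL-Probability.Discrete_Topology"
begin

type_synonym baire = "nat \<Rightarrow> nat discrete"

definition analytic :: "'a::topological_space set \<Rightarrow> bool" where
  "analytic P \<longleftrightarrow> (\<exists>C :: ('a \<times> baire) set. closed C \<and> P = fst ` C)"

lemma analytic_closed: "closed F \<Longrightarrow> analytic F"
  unfolding analytic_def
  by (rule exI[of _ "F \<times> UNIV"]) (auto intro: closed_Times)

lemma cont_coord0: "continuous_on UNIV (\<lambda>p::'a::topological_space \<times> baire. snd p i)"
proof -
  have "continuous_on UNIV (\<lambda>p::'a \<times> baire. (\<lambda>\<alpha>. \<alpha> i) (snd p))"
    by (rule continuous_on_compose2[OF continuous_on_product_coordinates continuous_on_snd[OF continuous_on_id]]) auto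
  then show ?thesis by simp
qed

lemma cont_shift: "continuous_on UNIV (\<lambda>p::'a::topological_space \<times> baire. (fst p, snd p \<circ> Suc))"
  by (intro continuous_intros continuous_on_coordinatewise_then_product)
     (simp add: o_def cont_coord0)

lemma cont_decode: "continuous_on UNIV (\<lambda>p::'a::topological_space \<times> baire. (fst p, \<lambda>i. snd p (prod_encode (n, i))))"
  by (intro continuous_intros continuous_on_coordinatewise_then_product)
     (simp add: cont_coord0)

lemma analytic_UN:
  fixes P :: "nat \<Rightarrow> 'a::topological_space set"
  assumes "\<And>n. analytic (P n)"
  shows "analytic (\<Union>n. P n)"
proof -
  obtain C where C: "\<And>n. closed (C n :: ('a \<times> baire) set)" "\<And>n. P n = fst ` C n"
    using assms unfolding analytic_def by metis
  define D where "D = {p. (fst p, snd p \<circ> Suc) \<in> C (of_discrete (snd p 0))}"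
  have "- D = (\<Union>n. (\<lambda>p. snd p 0) -` {discrete n} \<inter> (\<lambda>p. (fst p, snd p \<circ> Suc)) -` (- C n))"
    unfolding D_def by (auto simp: discrete_inverse) (metis of_discrete_inverse)
  moreover have "open \<dots>"
    using C(1) by (intro open_UN ballI open_Int open_vimage cont_coord0 cont_shift open_discrete) auto
  ultimately have "closed D" by (simp add: closed_def)
  moreover have "(\<Union>n. P n) = fst ` D"
  proof
    show "fst ` D \<subseteq> (\<Union>n. P n)"
      unfolding D_def C(2) by (force)
  next
    show "(\<Union>n. P n) \<subseteq> fst ` D"
    proof
      fix x assume "x \<in> (\<Union>n. P n)"
      then obtain n \<beta> where "(x, \<beta>) \<in> C n" unfolding C(2) by auto
      then have "(x, case_nat (discrete n) \<beta>) \<in> D"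
        unfolding D_def by (simp add: o_def discrete_inverse)
      then show "x \<in> fst ` D" by force
    qed
  qed
  ultimately show ?thesis unfolding analytic_def by blast
qed

lemma analytic_INT:
  fixes P :: "nat \<Rightarrow> 'a::topological_space set"
  assumes "\<And>n. analytic (P n)"
  shows "analytic (\<Inter>n. P n)"
proof -
  obtain C where C: "\<And>n. closed (C n :: ('a \<times> baire) set)" "\<And>n. P n = fst ` C n"
    using assms unfolding analytic_def by metis
  define D where "D = (\<Inter>n. (\<lambda>p. (fst p, \<lambda>i. snd p (prod_encode (n, i)))) -` C n)"
  have "closed D" unfolding D_def
    using C(1) by (intro closed_INT ballI closed_vimage cont_decode) auto
  moreover have "(\<Inter>n. P n) = fst ` D"
  proof
    show "fst ` D \<subseteq> (\<Inter>n. P n)"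
      unfolding D_def C(2) by force
  next
    show "(\<Inter>n. P n) \<subseteq> fst ` D"
    proof
      fix x assume "x \<in> (\<Inter>n. P n)"
      then have "\<forall>n. \<exists>\<beta>. (x, \<beta>) \<in> C n" unfolding C(2) by force
      then obtain f where f: "\<And>n. (x, f n) \<in> C n" by metis
      define \<beta> where "\<beta> k = f (fst (prod_decode k)) (snd (prod_decode k))" for k
      have "(x, \<beta>) \<in> D" unfolding D_def \<beta>_def using f by simp
      then show "x \<in> fst ` D" by force
    qed
  qed
  ultimately show ?thesis unfolding analytic_def by blast
qed

lemma open_Fsigma:
  fixes U :: "'a::metric_space set"
  assumes "open U"
  shows "\<exists>F :: nat \<Rightarrow> 'a set. (\<forall>n. closed (F n)) \<and> U = (\<Union>n. F n)"
proof -
  define F where "F n = (\<Inter>y\<in>-U. {x. 1 / real (Suc n) \<le> dist x y})" for n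
  have "closed (F n)" for n unfolding F_def
    by (intro closed_INT ballI closed_Collect_le continuous_intros)
  moreover have "U = (\<Union>n. F n)"
  proof
    show "(\<Union>n. F n) \<subseteq> U"
    proof
      fix x assume "x \<in> (\<Union>n. F n)"
      then obtain n where "x \<in> F n" by auto
      then show "x \<in> U" unfolding F_def by (auto dest: bspec[of _ _ x])
    qed
  next
    show "U \<subseteq> (\<Union>n. F n)"
    proof
      fix x assume "x \<in> U"
      then obtain e where e: "e > 0" "\<And>y. dist y x < e \<Longrightarrow> y \<in> U"
        using assms open_dist by metis
      obtain n where "inverse (real (Suc n)) < e" using e(1) reals_Archimedean by blast
      then have n: "1 / real (Suc n) < e" by (simp add: inverse_eq_divide)
      have "x \<in> F n" unfolding F_def
      proof (intro InterI, safe)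
        fix y assume "y \<notin> U"
        then have "\<not> dist y x < e" using e by blast
        then show "1 / real (Suc n) \<le> dist x y" using n by (simp add: dist_commute)
      qed
      then show "x \<in> (\<Union>n. F n)" by auto
    qed
  qed
  ultimately show ?thesis by blast
qed

lemma analytic_open:
  fixes U :: "'a::metric_space set"
  assumes "open U" shows "analytic U"
proof -
  obtain F :: "nat \<Rightarrow> 'a set" where F: "\<forall>n. closed (F n)" "U = (\<Union>n. F n)"
    using open_Fsigma[OF assms] by blast
  have "analytic (F n)" for n using F(1) by (intro analytic_closed) blast
  then show ?thesis unfolding F(2) by (rule analytic_UN)
qed

lemma borel_analytic:
  fixes S :: "'a::metric_space set"
  assumes "S \<in> sets borel"
  shows "analytic S \<and> analytic (- S)"
proof -
  have "S \<in> sigma_sets UNIV {S. open S}" using assms by (simp add: sets_borel)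
  then show ?thesis
  proof (induction rule: sigma_sets.induct)
    case (Basic a)
    then show ?case by (simp add: analytic_open analytic_closed closed_Compl)
  next
    case Empty
    then show ?case by (simp add: analytic_closed)
  next
    case (Compl a)
    have e1: "UNIV - a = - a" by blast
    have "analytic (-a) \<and> analytic a" using Compl.IH by (rule conjE) (rule conjI)
    then show ?case by (simp only: e1 double_compl)
  next
    case (Union a)
    have 1: "analytic (\<Union>i. a i)" by (rule analytic_UN) (rule conjunct1[OF Union.IH])
    have 3: "analytic (\<Inter>i. - a i)" by (rule analytic_INT) (rule conjunct2[OF Union.IH])
    show ?case by (rule conjI[OF 1]) (simp only: Compl_UN 3)
  qed
qed


definition om :: "'a measure \<Rightarrow> 'a set \<Rightarrow> real" where
  "om M P = Inf {measure M B | B. B \<in> sets M \<and> P \<subseteq> B}"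

lemma om_le:
  assumes "B \<in> sets M" "P \<subseteq> B"
  shows "om M P \<le> measure M B"
  unfolding om_def
proof (rule cInf_lower)
  show "measure M B \<in> {measure M B | B. B \<in> sets M \<and> P \<subseteq> B}" using assms by blast
  show "bdd_below {measure M B | B. B \<in> sets M \<and> P \<subseteq> B}"
    by (rule bdd_belowI[of _ 0]) (auto simp: measure_nonneg)
qed

lemma om_less:
  assumes "P \<subseteq> space M" "om M P < t"
  shows "\<exists>B \<in> sets M. P \<subseteq> B \<and> measure M B < t"
proof -
  have "{measure M B | B. B \<in> sets M \<and> P \<subseteq> B} \<noteq> {}"
  proof -
    have "measure M (space M) \<in> {measure M B | B. B \<in> sets M \<and> P \<subseteq> B}"
      using assms(1) by (intro CollectI exI[of _ "space M"]) simp
    then show ?thesis by (rule ex_in_conv[THEN iffD1, OF exI, simplified ex_in_conv])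
  qed
  from cInf_lessD[OF this] assms(2) show ?thesis unfolding om_def by blast
qed

lemma om_nonneg:
  assumes "P \<subseteq> space M"
  shows "0 \<le> om M P"
  unfolding om_def
proof (rule cInf_greatest)
  have "measure M (space M) \<in> {measure M B | B. B \<in> sets M \<and> P \<subseteq> B}"
    using assms(1) by (intro CollectI exI[of _ "space M"]) simp
  then show "{measure M B | B. B \<in> sets M \<and> P \<subseteq> B} \<noteq> {}" by (rule ex_in_conv[THEN iffD1, OF exI, simplified ex_in_conv])
qed auto

lemma le_of_all_less:
  fixes a b :: real
  assumes "\<And>n. a < b + 1 / real (Suc n)"
  shows "a \<le> b"
proof (rule ccontr)
  assume "\<not> a \<le> b"
  then have "0 < a - b" by simp
  then obtain n where "inverse (real (Suc n)) < a - b" using reals_Archimedean by blast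
  then show False using assms[of n] by (simp add: inverse_eq_divide)
qed

lemma om_hull:
  assumes "P \<subseteq> space M" "finite_measure M"
  shows "\<exists>H \<in> sets M. P \<subseteq> H \<and> measure M H = om M P"
proof -
  have "\<exists>B. B \<in> sets M \<and> P \<subseteq> B \<and> measure M B < om M P + 1 / real (Suc n)" for n
  proof -
    have "om M P < om M P + 1 / real (Suc n)" by simp
    from om_less[OF assms(1) this] show ?thesis by blast
  qed
  then have "\<forall>n. \<exists>B. B \<in> sets M \<and> P \<subseteq> B \<and> measure M B < om M P + 1 / real (Suc n)"
    by blast
  then obtain B where B0: "\<forall>n. B n \<in> sets M \<and> P \<subseteq> B n \<and> measure M (B n) < om M P + 1 / real (Suc n)"
    by (rule choice[THEN exE]) 
  then have B: "\<And>n. B n \<in> sets M" "\<And>n. P \<subseteq> B n" "\<And>n. measure M (B n) < om M P + 1 / real (Suc n)"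
    by auto
  define H where "H = (\<Inter>n. B n)"
  have H: "H \<in> sets M" unfolding H_def using B(1) by blast
  have PH: "P \<subseteq> H" unfolding H_def using B(2) by blast
  have "measure M H \<le> measure M (B n)" for n
    unfolding H_def by (rule finite_measure.finite_measure_mono[OF assms(2)]) (use B(1) in auto)
  then have "measure M H < om M P + 1 / real (Suc n)" for n
    by (rule le_less_trans) (rule B(3))
  then have "measure M H \<le> om M P"
    by (rule le_of_all_less)
  moreover have "om M P \<le> measure M H" by (rule om_le[OF H PH])
  ultimately have "measure M H = om M P" by linarith
  with H PH show ?thesis by blast
qed


lemma le_of_all_le:
  fixes a b :: real
  assumes "\<And>n. a \<le> b + 1 / real (Suc n)"
  shows "a \<le> b"
proof (rule le_of_all_less)
  fix n
  have "1 / real (Suc (Suc n)) < 1 / real (Suc n)" by (simp add: frac_less2)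
  then show "a < b + 1 / real (Suc n)" using assms[of "Suc n"] by linarith
qed

lemma om_mono:
  assumes "finite_measure M" "Q \<subseteq> space M" "P \<subseteq> Q"
  shows "om M P \<le> om M Q"
proof -
  obtain H where H: "H \<in> sets M" "Q \<subseteq> H" "measure M H = om M Q"
    using om_hull[OF assms(2,1)] by blast
  have "P \<subseteq> H" using assms(3) H(2) by (rule subset_trans)
  from om_le[OF H(1) this] H(3) show ?thesis by simp
qed

lemma om_incseq:
  assumes fm: "finite_measure M" and P: "\<And>n. P n \<subseteq> space M" and inc: "incseq P"
    and t: "t < om M (\<Union>n. P n)"
  shows "\<exists>n. t < om M (P n)"
proof (rule ccontr)
  assume "\<not> (\<exists>n. t < om M (P n))"
  then have le: "\<And>n. om M (P n) \<le> t" by (simp add: not_less)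
  have "\<exists>H. H \<in> sets M \<and> P n \<subseteq> H \<and> measure M H = om M (P n)" for n
    using om_hull[OF P fm] by blast
  then have "\<forall>n. \<exists>H. H \<in> sets M \<and> P n \<subseteq> H \<and> measure M H = om M (P n)" by blast
  then obtain H where H0: "\<forall>n. H n \<in> sets M \<and> P n \<subseteq> H n \<and> measure M (H n) = om M (P n)"
    by (rule choice[THEN exE])
  then have H: "\<And>n. H n \<in> sets M" "\<And>n. P n \<subseteq> H n" "\<And>n. measure M (H n) = om M (P n)"
    by auto
  define G where "G n = (\<Inter>m. H (m + n))" for n
  have G: "G n \<in> sets M" for n
    unfolding G_def by (rule sets.countable_INT) (use H(1) in auto)
  have PG: "P n \<subseteq> G n" for n
  proof -
    have "P n \<subseteq> H (m + n)" for m
    proof -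
      have "P n \<subseteq> P (m + n)" using inc by (rule monoD) simp
      then show ?thesis using H(2)[of "m + n"] by (rule subset_trans)
    qed
    then show ?thesis unfolding G_def by blast
  qed
  have incG: "incseq G"
  proof (rule monoI)
    fix n n' :: nat assume "n \<le> n'"
    show "G n \<subseteq> G n'"
    proof
      fix x assume x: "x \<in> G n"
      have "x \<in> H (m + n')" for m
      proof -
        have "x \<in> H ((m + n' - n) + n)" using x unfolding G_def by blast
        moreover have "(m + n' - n) + n = m + n'" using \<open>n \<le> n'\<close> by simp
        ultimately show ?thesis by simp
      qed
      then show "x \<in> G n'" unfolding G_def by blast
    qed
  qed
  have mG: "measure M (G n) \<le> t" for n
  proof -
    have "G n \<subseteq> H (0 + n)" unfolding G_def by (rule INT_lower) simp
    then have "G n \<subseteq> H n" by simp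
    then have "measure M (G n) \<le> measure M (H n)"
      by (rule finite_measure.finite_measure_mono[OF fm]) (rule H(1))
    then show ?thesis using H(3)[of n] le[of n] by linarith
  qed
  have lim: "(\<lambda>n. measure M (G n)) \<longlonglongrightarrow> measure M (\<Union>n. G n)"
    by (rule finite_measure.finite_Lim_measure_incseq[OF fm]) (use G incG in auto)
  have "measure M (\<Union>n. G n) \<le> t"
    by (rule LIMSEQ_le_const2[OF lim]) (use mG in blast)
  moreover have "om M (\<Union>n. P n) \<le> measure M (\<Union>n. G n)"
    by (rule om_le) (use G PG in blast)+
  ultimately show False using t by linarith
qed

lemma om_completion:
  assumes fm: "finite_measure M" and P: "P \<subseteq> space M"
    and K: "\<And>e. e > 0 \<Longrightarrow> \<exists>K. K \<in> sets M \<and> K \<subseteq> P \<and> om M P - e \<le> measure M K"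
  shows "P \<in> sets (completion M)"
proof -
  obtain H where H: "H \<in> sets M" "P \<subseteq> H" "measure M H = om M P"
    using om_hull[OF P fm] by blast
  have "\<exists>K. K \<in> sets M \<and> K \<subseteq> P \<and> om M P - 1 / real (Suc n) \<le> measure M K" for n
    by (rule K) simp
  then have "\<forall>n. \<exists>K. K \<in> sets M \<and> K \<subseteq> P \<and> om M P - 1 / real (Suc n) \<le> measure M K" by blast
  then obtain K where K0: "\<forall>n. K n \<in> sets M \<and> K n \<subseteq> P \<and> om M P - 1 / real (Suc n) \<le> measure M (K n)"
    by (rule choice[THEN exE])
  then have K: "\<And>n. K n \<in> sets M" "\<And>n. K n \<subseteq> P" "\<And>n. om M P - 1 / real (Suc n) \<le> measure M (K n)"
    by auto
  define L where "L = (\<Union>n. K n)"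
  have L: "L \<in> sets M" unfolding L_def using K(1) by blast
  have LP: "L \<subseteq> P" unfolding L_def using K(2) by blast
  have LH: "L \<subseteq> H" using LP H(2) by (rule subset_trans)
  have "measure M (K n) \<le> measure M L" for n
    by (rule finite_measure.finite_measure_mono[OF fm]) (use L in \<open>auto simp: L_def\<close>)
  then have "om M P \<le> measure M L + 1 / real (Suc n)" for n using K(3)[of n] by (smt (verit))
  then have "om M P \<le> measure M L" by (rule le_of_all_le)
  moreover have "measure M (H - L) = measure M H - measure M L"
    by (rule finite_measure.finite_measure_Diff[OF fm H(1) L LH])
  ultimately have "measure M (H - L) \<le> 0" using H(3) by linarith
  then have "measure M (H - L) = 0" using measure_nonneg[of M "H - L"] by linarith
  then have "emeasure M (H - L) = 0"
    using finite_measure.emeasure_eq_measure[OF fm] by simp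
  then have N: "H - L \<in> null_sets M" using H(1) L by (intro null_setsI) auto
  have "P = L \<union> (P - L)" using LP by blast
  moreover have "P - L \<subseteq> H - L" using H(2) by blast
  ultimately show ?thesis using N L by (intro sets_completionI) auto
qed


lemma proj_closed_measurable:
  fixes M :: "'x::metric_space measure"
    and C :: "('x \<times> 'z::{complete_space, second_countable_topology}) set"
  assumes fm: "finite_measure M" and sM: "sets M = sets borel" and cC: "closed C"
  shows "fst ` C \<in> sets (completion M)"
proof -
  have spM: "space M = UNIV" using sets_eq_imp_space_eq[OF sM] by simp
  obtain D0 :: "'z set" where D0: "countable D0" "\<And>X. open X \<Longrightarrow> X \<noteq> {} \<Longrightarrow> \<exists>d\<in>D0. d \<in> X"
    using countable_dense_exists by blast
  have D0ne: "D0 \<noteq> {}" using D0(2)[of UNIV] by auto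
  define D where "D = from_nat_into D0"
  have rD: "range D = D0" unfolding D_def by (rule range_from_nat_into[OF D0ne D0(1)])
  have dense: "\<exists>i. dist z (D i) < e" if "e > 0" for z e
  proof -
    have "ball z e \<noteq> {}" using that by simp
    then obtain d where d: "d \<in> D0" "d \<in> ball z e" using D0(2)[of "ball z e"] by auto
    then have "d \<in> range D" using rD by simp
    then obtain i where "d = D i" by blast
    then show ?thesis using d(2) by (auto simp: mem_ball)
  qed
  define Zs where "Zs s k = {z. \<forall>j<k. \<exists>i\<le>s j. dist z (D i) \<le> (1/2::real)^j}"
    for s :: "nat \<Rightarrow> nat" and k
  define PP where "PP s k = fst ` (C \<inter> (UNIV \<times> Zs s k))" for s k
  have PP0: "PP s 0 = fst ` C" for s unfolding PP_def Zs_def by simp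
  have Zs_cong: "Zs s k = Zs s' k" if "\<And>j. j < k \<Longrightarrow> s j = s' j" for s s' k
    unfolding Zs_def using that by simp
  have Zs_step: "Zs (s(k:=n)) (Suc k) = Zs s k \<inter> {z. \<exists>i\<le>n. dist z (D i) \<le> (1/2::real)^k}" for s k n
  proof -
    have "Zs (s(k:=n)) (Suc k) = Zs (s(k:=n)) k \<inter> {z. \<exists>i\<le>n. dist z (D i) \<le> (1/2::real)^k}"
      unfolding Zs_def by (auto simp: less_Suc_eq)
    moreover have "Zs (s(k:=n)) k = Zs s k" by (rule Zs_cong) simp
    ultimately show ?thesis by simp
  qed
  have Zs_dec: "Zs s (Suc k) \<subseteq> Zs s k" for s k
    unfolding Zs_def by auto
  have PP_inc: "incseq (\<lambda>n. PP (s(k:=n)) (Suc k))" for s k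
  proof (rule monoI)
    fix n n' :: nat assume "n \<le> n'"
    then have "Zs (s(k:=n)) (Suc k) \<subseteq> Zs (s(k:=n')) (Suc k)"
      unfolding Zs_step by (auto intro: order.trans)
    then show "PP (s(k:=n)) (Suc k) \<subseteq> PP (s(k:=n')) (Suc k)"
      unfolding PP_def by (intro image_mono) blast
  qed
  have PP_UN: "(\<Union>n. PP (s(k:=n)) (Suc k)) = PP s k" for s k
  proof
    show "(\<Union>n. PP (s(k:=n)) (Suc k)) \<subseteq> PP s k"
      unfolding PP_def Zs_step by blast
  next
    show "PP s k \<subseteq> (\<Union>n. PP (s(k:=n)) (Suc k))"
    proof
      fix x assume "x \<in> PP s k"
      then obtain z where xz: "(x, z) \<in> C" "z \<in> Zs s k" unfolding PP_def by auto
      obtain i where "dist z (D i) < (1/2::real)^k" using dense[of "(1/2::real)^k" z] by auto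
      then have "z \<in> Zs (s(k:=i)) (Suc k)" using xz(2) unfolding Zs_step by auto
      then have "x \<in> PP (s(k:=i)) (Suc k)" using xz(1) unfolding PP_def by force
      then show "x \<in> (\<Union>n. PP (s(k:=n)) (Suc k))" by blast
    qed
  qed
  have main: "\<exists>K. K \<in> sets M \<and> K \<subseteq> fst ` C \<and> om M (fst ` C) - e \<le> measure M K"
    if e: "e > 0" for e
  proof -
    define t where "t = om M (fst ` C) - e"
    have step: "\<exists>n. t < om M (PP (s(k:=n)) (Suc k))" if "t < om M (PP s k)" for s k
    proof -
      have "t < om M (\<Union>n. PP (s(k:=n)) (Suc k))" using that PP_UN by simp
      then show ?thesis using om_incseq[OF fm _ PP_inc] by (simp add: spM)
    qed
    define seq where "seq = rec_nat (\<lambda>_. 0::nat) (\<lambda>k s. s(k := (LEAST n. t < om M (PP (s(k:=n)) (Suc k)))))"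
    have seq0: "seq 0 = (\<lambda>_. 0)" unfolding seq_def by simp
    have seqS: "seq (Suc k) = (seq k)(k := (LEAST n. t < om M (PP ((seq k)(k:=n)) (Suc k))))" for k
      unfolding seq_def by simp
    have inv: "t < om M (PP (seq k) k)" for k
    proof (induction k)
      case 0
      then show ?case using e by (simp add: PP0 t_def)
    next
      case (Suc k)
      from step[OF Suc] have "t < om M (PP ((seq k)(k:=(LEAST n. t < om M (PP ((seq k)(k:=n)) (Suc k))))) (Suc k))"
        by (rule LeastI_ex)
      then show ?case by (subst seqS)
    qed
    define s where "s j = seq (Suc j) j" for j
    have seq_stable: "seq k j = s j" if "j < k" for j k
      using that
    proof (induction k)
      case 0 then show ?case by simp
    next
      case (Suc k)
      show ?case
      proof (cases "j = k")
        case True then show ?thesis by (simp add: s_def)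
      next
        case False
        then have "j < k" using Suc.prems by simp
        then show ?thesis using Suc.IH False by (simp add: seqS)
      qed
    qed
    have PPs: "PP s k = PP (seq k) k" for k
    proof -
      have "Zs s k = Zs (seq k) k" by (rule Zs_cong) (simp add: seq_stable)
      then show ?thesis unfolding PP_def by simp
    qed
    have inv2: "t < om M (PP s k)" for k using inv[of k] PPs[of k] by simp
    define K where "K = (\<Inter>k. closure (PP s k))"
    have Kclosed: "closed K" unfolding K_def by (intro closed_INT) simp
    then have Ksets: "K \<in> sets M" using sM by (simp add: borel_closed)
    have clsets: "closure (PP s k) \<in> sets M" for k using sM by (simp add: borel_closed)
    have dec: "antimono_on UNIV (\<lambda>k. closure (PP s k))"
    proof (rule decseq_SucI)
      fix n
      have "PP s (Suc n) \<subseteq> PP s n" unfolding PP_def using Zs_dec by blast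
      then show "closure (PP s (Suc n)) \<subseteq> closure (PP s n)" by (rule closure_mono)
    qed
    have lim: "(\<lambda>k. measure M (closure (PP s k))) \<longlonglongrightarrow> measure M K"
      unfolding K_def
      by (rule finite_measure.finite_Lim_measure_decseq[OF fm]) (use clsets dec in auto)
    have "t \<le> measure M (closure (PP s k))" for k
    proof -
      have "om M (PP s k) \<le> measure M (closure (PP s k))"
        by (rule om_le[OF clsets closure_subset])
      then show ?thesis using inv2[of k] by linarith
    qed
    then have mK: "t \<le> measure M K"
      by (intro LIMSEQ_le_const[OF lim]) blast
    have KC: "K \<subseteq> fst ` C"
    proof
      fix x assume "x \<in> K"
      then have xc: "x \<in> closure (PP s k)" for k unfolding K_def by blast
      have "\<exists>q. q \<in> C \<and> snd q \<in> Zs s k \<and> dist (fst q) x < 1 / real (Suc k)" for k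
      proof -
        obtain y where "y \<in> PP s k" "dist y x < 1 / real (Suc k)"
          using xc[of k] closure_approachable[of x "PP s k"] by (metis of_nat_0_less_iff zero_less_Suc zero_less_divide_1_iff)
        then show ?thesis unfolding PP_def by force
      qed
      then have "\<forall>k. \<exists>q. q \<in> C \<and> snd q \<in> Zs s k \<and> dist (fst q) x < 1 / real (Suc k)" by blast
      then obtain Q where Q0: "\<forall>k. Q k \<in> C \<and> snd (Q k) \<in> Zs s k \<and> dist (fst (Q k)) x < 1 / real (Suc k)"
        by (rule choice[THEN exE])
      then have QC: "\<And>k. Q k \<in> C" and QZ: "\<And>k. snd (Q k) \<in> Zs s k"
        and Qd: "\<And>k. dist (fst (Q k)) x < 1 / real (Suc k)" by auto
      define T where "T = range (\<lambda>k. snd (Q k))"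
      have "compact (closure T)"
        unfolding compact_eq_totally_bounded
      proof (intro conjI allI impI)
        show "uniform_space_class.complete (closure T)" by (simp add: complete_eq_closed)
      next
        fix \<epsilon> :: real assume "\<epsilon> > 0"
        then have "\<epsilon> / 2 > 0" by simp
        then obtain j where j: "(1/2::real)^j < \<epsilon> / 2" using real_arch_pow_inv[of "\<epsilon>/2" "1/2::real"] by auto
        define F where "F = (\<lambda>k. snd (Q k)) ` {..j} \<union> D ` {..s j}"
        have fF: "finite F" unfolding F_def by simp
        have TF: "T \<subseteq> (\<Union>y\<in>F. cball y (\<epsilon>/2))"
        proof
          fix z assume "z \<in> T"
          then obtain m where zm: "z = snd (Q m)" unfolding T_def by blast
          show "z \<in> (\<Union>y\<in>F. cball y (\<epsilon>/2))"
          proof (cases "m \<le> j")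
            case True
            then have "z \<in> F" unfolding F_def zm by blast
            moreover have "z \<in> cball z (\<epsilon>/2)" using \<open>\<epsilon>/2 > 0\<close> by simp
            ultimately show ?thesis by blast
          next
            case False
            then have "j < m" by simp
            with QZ[of m] obtain i where i: "i \<le> s j" "dist z (D i) \<le> (1/2::real)^j"
              unfolding Zs_def zm by blast
            then have "D i \<in> F" unfolding F_def by blast
            moreover have "z \<in> cball (D i) (\<epsilon>/2)" using i(2) j by (simp add: mem_cball dist_commute)
            ultimately show ?thesis by blast
          qed
        qed
        have "closed (\<Union>y\<in>F. cball y (\<epsilon>/2))" by (rule closed_UN[OF fF]) simp
        then have "closure T \<subseteq> (\<Union>y\<in>F. cball y (\<epsilon>/2))" by (rule closure_minimal[OF TF])
        also have "\<dots> \<subseteq> (\<Union>y\<in>F. ball y \<epsilon>)"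
          using \<open>\<epsilon> > 0\<close> by (intro UN_mono) (auto simp: mem_cball mem_ball)
        finally show "\<exists>k. finite k \<and> closure T \<subseteq> (\<Union>y\<in>k. ball y \<epsilon>)" using fF by blast
      qed
      then have sc: "seq_compact (closure T)" by (rule compact_imp_seq_compact)
      have inT: "\<forall>n. snd (Q n) \<in> closure T"
      proof
        fix n
        have "snd (Q n) \<in> T" unfolding T_def by (rule rangeI)
        then show "snd (Q n) \<in> closure T" by (rule subsetD[OF closure_subset])
      qed
      obtain l r where "l \<in> closure T" and r: "strict_mono r" and lr: "((\<lambda>k. snd (Q k)) \<circ> r) \<longlonglongrightarrow> l"
        by (rule seq_compactE[OF sc inT])
      have xs: "(\<lambda>k. fst (Q k)) \<longlonglongrightarrow> x"
      proof (rule metric_LIMSEQ_I)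
        fix \<rho> :: real assume "\<rho> > 0"
        then obtain no where no: "inverse (real (Suc no)) < \<rho>" using reals_Archimedean by blast
        have "dist (fst (Q n)) x < \<rho>" if "n \<ge> no" for n
        proof -
          have "1 / real (Suc n) \<le> 1 / real (Suc no)" using that by (intro divide_left_mono) auto
          moreover have "inverse (real (Suc no)) = 1 / real (Suc no)" by (simp add: inverse_eq_divide)
          ultimately show ?thesis using Qd[of n] no by linarith
        qed
        then show "\<exists>no. \<forall>n\<ge>no. dist (fst (Q n)) x < \<rho>" by blast
      qed
      have "((\<lambda>k. fst (Q k)) \<circ> r) \<longlonglongrightarrow> x" by (rule LIMSEQ_subseq_LIMSEQ[OF xs r])
      then have "(\<lambda>n. (fst (Q (r n)), snd (Q (r n)))) \<longlonglongrightarrow> (x, l)"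
        using lr by (intro tendsto_Pair) (simp_all add: o_def)
      then have lim2: "(\<lambda>n. Q (r n)) \<longlonglongrightarrow> (x, l)" by simp
      have QrC: "\<And>n. Q (r n) \<in> C" by (rule QC)
      have "(x, l) \<in> C" by (rule closed_sequentially[OF cC QrC lim2])
      then show "x \<in> fst ` C" by force
    qed
    show ?thesis using Ksets KC mK unfolding t_def by blast
  qed
  show ?thesis by (rule om_completion[OF fm]) (use main in \<open>simp_all add: spM\<close>)
qed


lemma proj_borel_measurable:
  fixes M :: "'a::polish_space measure" and S :: "('a \<times> 'a) set"
  assumes fm: "finite_measure M" and sM: "sets M = sets borel" and S: "S \<in> sets borel"
  shows "fst ` S \<in> sets (completion M)"
proof -
  obtain C :: "(('a \<times> 'a) \<times> baire) set" where C: "closed C" "S = fst ` C"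
    using borel_analytic[OF S] unfolding analytic_def by blast
  define g :: "'a \<times> ('a \<times> baire) \<Rightarrow> ('a \<times> 'a) \<times> baire"
    where "g p = ((fst p, fst (snd p)), snd (snd p))" for p
  have gc: "continuous_on UNIV g" unfolding g_def by (intro continuous_intros)
  define C' where "C' = g -` C"
  have cC': "closed C'" unfolding C'_def by (rule closed_vimage[OF C(1) gc])
  have eq: "fst ` C' = fst ` S"
  proof
    show "fst ` C' \<subseteq> fst ` S"
    proof
      fix x assume "x \<in> fst ` C'"
      then obtain p where p: "p \<in> C'" "x = fst p" by blast
      then have "g p \<in> C" unfolding C'_def by simp
      then have "fst (g p) \<in> S" unfolding C(2) by (rule imageI)
      moreover have "fst (fst (g p)) = x" using p(2) by (simp add: g_def)
      ultimately show "x \<in> fst ` S" by (metis imageI)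
    qed
  next
    show "fst ` S \<subseteq> fst ` C'"
    proof
      fix x assume "x \<in> fst ` S"
      then obtain q where q: "q \<in> S" "x = fst q" by blast
      then obtain r where r: "r \<in> C" "q = fst r" unfolding C(2) by blast
      define p where "p = (fst (fst r), (snd (fst r), snd r))"
      have "g p = r" unfolding g_def p_def by simp
      then have "p \<in> C'" unfolding C'_def using r(1) by simp
      moreover have "fst p = x" unfolding p_def using q(2) r(2) by simp
      ultimately show "x \<in> fst ` C'" by (metis imageI)
    qed
  qed
  have "fst ` C' \<in> sets (completion M)" by (rule proj_closed_measurable[OF fm sM cC'])
  then show ?thesis using eq by simp
qed

theorem lemma7p7:
  fixes M :: "'a::polish_space measure" and E :: "'a \<Rightarrow> 'a \<Rightarrow> bool" and d :: nat
  assumes "prob_space M" and "sets M = sets borel"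
    and "borel_graph M E" and "d_regular M E d"
    and "pmp_graph M E" and "ergodic_graph M E"
    and "no_odd_cycles E"
    and "strict_tutte M E"
  shows "strictly_expanding_indep M E"
proof -
  have fm: "finite_measure M" using assms(1) by (simp add: prob_space_def)
  have sM: "sets M = sets borel" by (rule assms(2))
  have spM: "space M = UNIV" using sets_eq_imp_space_eq[OF sM] by simp
  have fmc: "finite_measure (completion M)"
  proof (rule finite_measureI)
    have "space M \<in> sets M" by simp
    then have "emeasure (completion M) (space M) = emeasure M (space M)" by simp
    then show "emeasure (completion M) (space (completion M)) \<noteq> \<infinity>"
      using finite_measure.emeasure_finite[OF fm] by simp
  qed
  have Esym: "\<And>x y. E x y \<Longrightarrow> E y x" and Eirr: "\<And>x. \<not> E x x"
    and Emeas: "{p. E (fst p) (snd p)} \<in> sets (M \<Otimes>\<^sub>M M)"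
    using assms(3) unfolding borel_graph_def by auto
  have sMM: "sets (M \<Otimes>\<^sub>M M) = sets (borel :: ('a \<times> 'a) measure)"
  proof -
    have e: "(borel \<Otimes>\<^sub>M borel) = (borel :: ('a \<times> 'a) measure)" by (rule borel_prod)
    show ?thesis using sets_pair_measure_cong[OF sM sM] unfolding e .
  qed
  have nbhd_meas: "nbhd E B \<in> sets (completion M)" if B: "B \<in> sets M" for B
  proof -
    have "UNIV \<times> B \<in> sets (M \<Otimes>\<^sub>M M)"
      using pair_measureI[OF sets.top B, of M] spM by simp
    then have "{p. E (fst p) (snd p)} \<inter> (UNIV \<times> B) \<in> sets (M \<Otimes>\<^sub>M M)"
      using Emeas by (rule sets.Int[rotated])
    then have Sb: "{p. E (fst p) (snd p)} \<inter> (UNIV \<times> B) \<in> sets borel" using sMM by simp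
    have "nbhd E B = fst ` ({p. E (fst p) (snd p)} \<inter> (UNIV \<times> B))"
      unfolding nbhd_def by force
    then show ?thesis using proj_borel_measurable[OF fm sM Sb] by simp
  qed
  obtain c where c: "c < 1" "\<And>A. A \<in> sets M \<Longrightarrow> nu M E A (odd_part E A) \<le> c * measure M A"
    using assms(8) unfolding strict_tutte_def by blast
  define c' where "c' = (if c > 0 then 1 / c else 2)"
  have c'1: "c' > 1" unfolding c'_def using c(1) by (auto simp: field_simps)
  have bound: "c' * measure M A \<le> measure (completion M) (nbhd E A)"
    if A: "A \<in> sets M" and ind: "independent_set E A" for A
  proof -
    define NA where "NA = nbhd E A"
    have NAc: "NA \<in> sets (completion M)" unfolding NA_def by (rule nbhd_meas[OF A])
    obtain S0 N N' where SN: "NA = S0 \<union> N" "N \<subseteq> N'" "N' \<in> null_sets M" "S0 \<in> sets M"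
      using sets_completionE[OF NAc] by blast
    define B where "B = (S0 \<union> N') - A"
    have N'sets: "N' \<in> sets M" using SN(3) by auto
    have Bsets: "B \<in> sets M" unfolding B_def using SN(4) N'sets A by auto
    have disj: "NA \<inter> A = {}"
      using ind unfolding NA_def nbhd_def independent_set_def by blast
    have NAB: "NA \<subseteq> B" unfolding B_def using SN(1,2) disj by blast
    have mB: "measure M B \<le> measure (completion M) NA"
    proof -
      have "measure M B \<le> measure M (S0 \<union> N')"
        unfolding B_def by (rule finite_measure.finite_measure_mono[OF fm]) (use SN(4) N'sets in auto)
      also have "\<dots> \<le> measure M S0 + measure M N'" by (rule measure_Un_le[OF SN(4) N'sets])
      also have "measure M N' = 0" by (rule measure_eq_0_null_sets[OF SN(3)])
      also have "measure M S0 = measure (completion M) S0" using SN(4) by simp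
      also have "measure (completion M) S0 \<le> measure (completion M) NA"
        by (rule finite_measure.finite_measure_mono[OF fmc]) (use SN(1) NAc in auto)
      finally show ?thesis by simp
    qed
    define Y where "Y k = odd_part E B \<inter> odd_part_size E B (2 * k + 1)" for k
    define f where "f k = measure (completion M) (Y k) / real (2 * k + 1)" for k
    have nu_eq: "nu M E B (odd_part E B) = suminf f"
      unfolding nu_def f_def Y_def by (simp add: Int_commute)
    have comp_self: "x \<in> comp_outside E B x" for x unfolding comp_outside_def by simp
    have Y0: "Y 0 = - B - nbhd E (- B)"
    proof
      show "Y 0 \<subseteq> - B - nbhd E (- B)"
      proof
        fix x assume "x \<in> Y 0"
        then have x: "x \<notin> B" "finite (comp_outside E B x)" "card (comp_outside E B x) = 1"
          unfolding Y_def odd_part_size_def by auto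
        then obtain z where "comp_outside E B x = {z}" using card_1_singleton_iff by (metis One_nat_def)
        then have cx: "comp_outside E B x = {x}" using comp_self[of x] by simp
        have "x \<notin> nbhd E (- B)"
        proof
          assume "x \<in> nbhd E (- B)"
          then obtain y where y: "E x y" "y \<notin> B" unfolding nbhd_def by blast
          then have "y \<in> comp_outside E B x" unfolding comp_outside_def using x(1)
            by (simp add: r_into_rtranclp)
          then have "y = x" using cx by blast
          then show False using y(1) Eirr by simp
        qed
        then show "x \<in> - B - nbhd E (- B)" using x(1) by blast
      qed
    next
      show "- B - nbhd E (- B) \<subseteq> Y 0"
      proof
        fix x assume x: "x \<in> - B - nbhd E (- B)"
        have "comp_outside E B x \<subseteq> {x}"
        proof
          fix y assume "y \<in> comp_outside E B x"
          then have "(\<lambda>u v. E u v \<and> u \<notin> B \<and> v \<notin> B)\<^sup>*\<^sup>* x y" unfolding comp_outside_def by simp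
          then show "y \<in> {x}"
          proof (rule converse_rtranclpE)
            assume "x = y" then show ?thesis by simp
          next
            fix z assume "E x z \<and> x \<notin> B \<and> z \<notin> B"
            then have "x \<in> nbhd E (- B)" unfolding nbhd_def by blast
            then show ?thesis using x by blast
          qed
        qed
        then have cx: "comp_outside E B x = {x}" using comp_self[of x] by blast
        then show "x \<in> Y 0" using x unfolding Y_def odd_part_def odd_part_size_def by simp
      qed
    qed
    have "space M - B \<in> sets M" by (rule sets.Diff[OF sets.top Bsets])
    moreover have "space M - B = - B" using spM by blast
    ultimately have Bc: "- B \<in> sets M" by simp
    have Y0c: "Y 0 \<in> sets (completion M)"
      unfolding Y0 using nbhd_meas[OF Bc] Bc by (intro sets.Diff) auto
    have AY0: "A \<subseteq> Y 0"
    proof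
      fix a assume a: "a \<in> A"
      have "a \<notin> B" unfolding B_def using a by blast
      moreover have "a \<notin> nbhd E (- B)"
      proof
        assume "a \<in> nbhd E (- B)"
        then obtain y where y: "E a y" "y \<notin> B" unfolding nbhd_def by blast
        have "y \<in> NA" unfolding NA_def nbhd_def using Esym[OF y(1)] a by blast
        then show False using NAB y(2) by blast
      qed
      ultimately show "a \<in> Y 0" unfolding Y0 by blast
    qed
    have mA: "measure M A \<le> f 0"
    proof -
      have "measure M A = measure (completion M) A" using A by simp
      also have "\<dots> \<le> measure (completion M) (Y 0)"
        by (rule finite_measure.finite_measure_mono[OF fmc AY0 Y0c])
      finally show ?thesis unfolding f_def by simp
    qed
    have f_nonneg: "0 \<le> f k" for k unfolding f_def by simp
    define T where "T k = (if Y k \<in> sets (completion M) then Y k else {})" for k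
    have Tsets: "range T \<subseteq> sets (completion M)" unfolding T_def by auto
    have Tdisj: "disjoint_family T"
    proof (unfold disjoint_family_on_def, intro ballI impI)
      fix m n :: nat assume "m \<noteq> n"
      have "Y m \<inter> Y n = {}"
      proof -
        have "2 * m + 1 \<noteq> 2 * n + 1" using \<open>m \<noteq> n\<close> by simp
        then show ?thesis unfolding Y_def odd_part_size_def by auto
      qed
      then show "T m \<inter> T n = {}" unfolding T_def by auto
    qed
    have "(\<lambda>k. measure (completion M) (T k)) sums measure (completion M) (\<Union>k. T k)"
      by (rule finite_measure.finite_measure_UNION[OF fmc Tsets Tdisj])
    then have sT: "summable (\<lambda>k. measure (completion M) (T k))" by (rule sums_summable)
    have fT: "norm (f k) \<le> measure (completion M) (T k)" for k
    proof (cases "Y k \<in> sets (completion M)")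
      case True
      have "measure (completion M) (Y k) / real (2 * k + 1) \<le> measure (completion M) (Y k) / 1"
        by (rule divide_left_mono) auto
      then have "measure (completion M) (Y k) / real (2 * k + 1) \<le> measure (completion M) (Y k)"
        by simp
      then show ?thesis using True f_nonneg[of k] unfolding T_def f_def by simp
    next
      case False
      then show ?thesis unfolding T_def f_def by (simp add: measure_notin_sets)
    qed
    have sf: "summable f" by (rule summable_comparison_test[OF _ sT]) (use fT in blast)
    have "sum f {..<1} \<le> suminf f" by (rule sum_le_suminf[OF sf]) (auto simp: f_nonneg)
    then have "f 0 \<le> suminf f" by simp
    then have "measure M A \<le> c * measure M B" using mA c(2)[OF Bsets] nu_eq by linarith
    show ?thesis
    proof (cases "c > 0")
      case True
      have "measure M A / c \<le> measure M B"
        using \<open>measure M A \<le> c * measure M B\<close> True by (simp add: divide_le_eq mult.commute)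
      then show ?thesis using mB True unfolding c'_def NA_def by simp
    next
      case False
      have "c * measure M B \<le> 0" using False measure_nonneg[of M B] by (simp add: mult_nonpos_nonneg)
      then have "measure M A = 0" using \<open>measure M A \<le> c * measure M B\<close> measure_nonneg[of M A] by linarith
      then show ?thesis using measure_nonneg[of "completion M" "nbhd E A"] by simp
    qed
  qed
  show ?thesis unfolding strictly_expanding_indep_def using c'1 bound by blast
qed

end
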